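(* (1) For every tidy fixpoint formula $\xi=\eta x.\chi$, $\Omega_g(\xi)$ has parity $\eta$. (2) If $\phi,\psi$ are tidy fixpoint formulas with $\phi\sqsubseteq_C\psi$, then $\Omega_g(\phi)\le\Omega_g(\psi)$, and $\Omega_g(\phi)<\Omega_g(\psi)$ if $\phi$ and $\psi$ have different types. (3) For every closure cluster $C$ (of tidy formulas), $\mathit{cd}(C)=\mathit{ind}(C)=|\mathrm{Ran}(\Omega_g\restriction_C)|$, where $\mathit{ind}(C)$ is the maximal $n$ such that there are fixpoint formulas $\phi_1,\dots,\phi_n\in C$ with $\Omega_g(\phi_1)<\cdots<\Omega_g(\phi_n)$ and $\Omega_g(\phi_i),\Omega_g(\phi_{i+1})$ of different parity for all $i<n$.
   Context: Syntax. Formulas of the modal $\mu$-calculus are taken in negation normal form: $\phi ::= \top \mid \bot \mid p \mid \neg p \mid x \mid \phi\land\phi\mid\phi\lor\phi\mid\Diamond\phi\mid\Box\phi\mid\mu x.\phi\mid\nu x.\phi$, where $p$ ranges over proposition letters and $x$ over an infinite supply of variables (which occur only positively). The formulas $\top,\bot,p,\neg p,x$ are atomic. $\mathrm{FV}(\phi)$ and $\mathrm{BV}(\phi)$ are the sets of free and bound variables of $\phi$; $\phi$ is tidy if $\mathrm{FV}(\phi)\cap\mathrm{BV}(\phi)=\varnothing$. A fixpoint formula is one of the form $\eta x.\chi$ with $\eta\in\{\mu,\nu\}$; it has type $\eta$, where $\mu$ counts as odd and $\nu$ as even parity, and $\bar\eta$ denotes the other operator. $\chi[\xi/x]$ is the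 result of replacing every free occurrence of $x$ in $\chi$ by $\xi$; $\xi$ is free for $x$ in $\chi$ if no free variable of $\xi$ becomes bound in $\chi[\xi/x]$. Traces and closure. The trace relation $\rightarrow_C$: $\phi_0\odot\phi_1\rightarrow_C\phi_i$ for $\odot\in\{\land,\lor\}$, $i\in\{0,1\}$; $\heartsuit\phi\rightarrow_C\phi$ for $\heartsuit\in\{\Diamond,\Box\}$; $\eta x.\phi\rightarrow_C\phi[\eta x.\phi/x]$; atomic formulas have no successors. $\twoheadrightarrow_C$ is the reflexive transitive closure of $\rightarrow_C$, $\mathrm{Clos}(\phi)=\{\psi\mid\phi\twoheadrightarrow_C\psi\}$ (a finite set), and a trace is a finite or infinite sequence of formulas with consecutive members related by $\rightarrow_C$. Write $\phi\equiv_C\psi$ iff $\phi\twoheadrightarrow_C\psi$ and $\psi\twoheadrightarrow_C\phi$; its equivalence classes are (closure) clusters, and $C(\phi)$ is the cluster of $\phi$. Free subformulas. $\phi\trianglelefteq_f\psi$ iff $\psi=\chi[\phi/y]$ for some formula $\chi$ and variable $y$ with $y\in\mathrm{FV}(\chi)$ and $\phi$ free for $y$ in $\chi$. Closure order. For a formula $\psi$, write $\rho\twoheadrightarrow_C^{\psi}\sigma$ iff there is a trace $\rho=\chi_0\rightarrow_C\cdots\rightarrow_C\chi_n=\sigma$ ($n\ge0$) with $\psi\trianglelefteq_f\chi_i$ for all $i\le n$. For fixpoint formulas $\phi,\psi$: $\phi\sqsubseteq_C\psi$ iff $\psi\twoheadrightarrow_C^{\psi}\phi$; $\phi\sqsubset_C\psi$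 iff $\phi\sqsubseteq_C\psi$ and $\psi\not\sqsubseteq_C\phi$. Chains. An alternating $\sqsubset_C$-chain of length $n$ is a sequence $\eta_1x_1.\chi_1,\dots,\eta_nx_n.\chi_n$ of tidy fixpoint formulas with $\eta_ix_i.\chi_i\sqsubset_C\eta_{i+1}x_{i+1}.\chi_{i+1}$ and $\eta_{i+1}=\bar\eta_i$ for all $i<n$; it starts at the first and leads up to the last formula. For a tidy fixpoint formula $\xi$, $h^\uparrow(\xi)$ (resp. $h^\downarrow(\xi)$) is the maximal length of an alternating $\sqsubset_C$-chain starting at (resp. leading up to) $\xi$. For a cluster $C$, $\mathit{cd}(C)$ is the maximal length of an alternating $\sqsubset_C$-chain inside $C$. Global priority map. For a tidy fixpoint formula $\psi=\eta y.\phi$ let $d=\mathit{cd}(C(\psi))-h^\uparrow(\psi)$ and set $\Omega_g(\psi)=d$ if $d$ has parity $\eta$ and $\Omega_g(\psi)=d+1$ otherwise; $\Omega_g$ is undefined on non-fixpoint formulas. *)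

theory Defs
  imports Main
begin

datatype fpop = Mu | Nu

datatype 'p fml =
    Top | Bot | Prop 'p | NProp 'p | Var nat
  | And "'p fml" "'p fml" | Or "'p fml" "'p fml"
  | Dia "'p fml" | Box "'p fml"
  | Fix fpop nat "'p fml"

fun FV :: "'p fml \<Rightarrow> nat set" where
  "FV (Var x) = {x}"
| "FV (And a b) = FV a \<union> FV b"
| "FV (Or a b) = FV a \<union> FV b"
| "FV (Dia a) = FV a"
| "FV (Box a) = FV a"
| "FV (Fix e x a) = FV a - {x}"
| "FV _ = {}"

fun BV :: "'p fml \<Rightarrow> nat set" where
  "BV (And a b) = BV a \<union> BV b"
| "BV (Or a b) = BV a \<union> BV b"
| "BV (Dia a) = BV a"
| "BV (Box a) = BV a"
| "BV (Fix e x a) = insert x (BV a)"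
| "BV _ = {}"

definition tidy :: "'p fml \<Rightarrow> bool" where
  "tidy \<phi> \<longleftrightarrow> FV \<phi> \<inter> BV \<phi> = {}"

fun is_fix :: "'p fml \<Rightarrow> bool" where
  "is_fix (Fix e x a) = True"
| "is_fix _ = False"

fun fptype :: "'p fml \<Rightarrow> fpop" where
  "fptype (Fix e x a) = e"
| "fptype _ = Mu"  (* irrelevant on non-fixpoint formulas *)

definition has_parity :: "int \<Rightarrow> fpop \<Rightarrow> bool" where
  "has_parity d e \<longleftrightarrow> (if e = Mu then odd d else even d)"

text \<open>subst chi xi x  =  chi[xi/x]: replace every free occurrence of x in chi by xi.\<close>
fun subst :: "'p fml \<Rightarrow> 'p fml \<Rightarrow> nat \<Rightarrow> 'p fml" where
  "subst (Var y) \<xi> x = (if y = x then \<xi> else Var y)"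
| "subst (And a b) \<xi> x = And (subst a \<xi> x) (subst b \<xi> x)"
| "subst (Or a b) \<xi> x = Or (subst a \<xi> x) (subst b \<xi> x)"
| "subst (Dia a) \<xi> x = Dia (subst a \<xi> x)"
| "subst (Box a) \<xi> x = Box (subst a \<xi> x)"
| "subst (Fix e y a) \<xi> x = (if y = x then Fix e y a else Fix e y (subst a \<xi> x))"
| "subst a \<xi> x = a"

text \<open>free_for xi x chi: no free variable of xi becomes bound in chi[xi/x].\<close>
fun free_for :: "'p fml \<Rightarrow> nat \<Rightarrow> 'p fml \<Rightarrow> bool" where
  "free_for \<xi> x (And a b) = (free_for \<xi> x a \<and> free_for \<xi> x b)"
| "free_for \<xi> x (Or a b) = (free_for \<xi> x a \<and> free_for \<xi> x b)"
| "free_for \<xi> x (Dia a) = free_for \<xi> x a"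
| "free_for \<xi> x (Box a) = free_for \<xi> x a"
| "free_for \<xi> x (Fix e y a) =
     (x \<notin> FV (Fix e y a) \<or> (y \<notin> FV \<xi> \<and> free_for \<xi> x a))"
| "free_for \<xi> x _ = True"

inductive step :: "'p fml \<Rightarrow> 'p fml \<Rightarrow> bool" where
  and_l: "step (And a b) a"
| and_r: "step (And a b) b"
| or_l: "step (Or a b) a"
| or_r: "step (Or a b) b"
| dia: "step (Dia a) a"
| box: "step (Box a) a"
| unfold: "step (Fix e x a) (subst a (Fix e x a) x)"

abbreviation steps :: "'p fml \<Rightarrow> 'p fml \<Rightarrow> bool" where
  "steps \<equiv> step\<^sup>*\<^sup>*"

definition Clos :: "'p fml \<Rightarrow> 'p fml set" where
  "Clos \<phi> = {\<psi>. steps \<phi> \<psi>}"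

definition cluster :: "'p fml \<Rightarrow> 'p fml set" where
  "cluster \<phi> = {\<psi>. steps \<phi> \<psi> \<and> steps \<psi> \<phi>}"

definition free_sub :: "'p fml \<Rightarrow> 'p fml \<Rightarrow> bool" where
  "free_sub \<phi> \<psi> \<longleftrightarrow> (\<exists>\<chi> y. \<psi> = subst \<chi> \<phi> y \<and> y \<in> FV \<chi> \<and> free_for \<phi> y \<chi>)"

definition steps_in :: "'p fml \<Rightarrow> 'p fml \<Rightarrow> 'p fml \<Rightarrow> bool" where
  "steps_in \<psi> \<rho> \<sigma> \<longleftrightarrow> free_sub \<psi> \<rho> \<and>
     (\<lambda>a b. step a b \<and> free_sub \<psi> a \<and> free_sub \<psi> b)\<^sup>*\<^sup>* \<rho> \<sigma>"

definition cle :: "'p fml \<Rightarrow> 'p fml \<Rightarrow> bool" where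
  "cle \<phi> \<psi> \<longleftrightarrow> is_fix \<phi> \<and> is_fix \<psi> \<and> steps_in \<psi> \<psi> \<phi>"

definition clt :: "'p fml \<Rightarrow> 'p fml \<Rightarrow> bool" where
  "clt \<phi> \<psi> \<longleftrightarrow> cle \<phi> \<psi> \<and> \<not> cle \<psi> \<phi>"

definition alt_chain :: "'p fml list \<Rightarrow> bool" where
  "alt_chain cs \<longleftrightarrow> (\<forall>\<phi> \<in> set cs. tidy \<phi> \<and> is_fix \<phi>) \<and>
     (\<forall>i. Suc i < length cs \<longrightarrow> clt (cs ! i) (cs ! Suc i)
                               \<and> fptype (cs ! Suc i) \<noteq> fptype (cs ! i))"

definition h_up :: "'p fml \<Rightarrow> nat" where
  "h_up \<xi> = Max {length cs | cs. alt_chain cs \<and> cs \<noteq> [] \<and> hd cs = \<xi>}"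

definition h_down :: "'p fml \<Rightarrow> nat" where
  "h_down \<xi> = Max {length cs | cs. alt_chain cs \<and> cs \<noteq> [] \<and> last cs = \<xi>}"

definition cd :: "'p fml set \<Rightarrow> nat" where
  "cd C = Max {length cs | cs. alt_chain cs \<and> set cs \<subseteq> C}"

definition Omega_g :: "'p fml \<Rightarrow> int" where
  "Omega_g \<psi> = (let d = int (cd (cluster \<psi>)) - int (h_up \<psi>)
                 in if has_parity d (fptype \<psi>) then d else d + 1)"

definition ind :: "'p fml set \<Rightarrow> nat" where
  "ind C = Max {length fs | fs. (\<forall>\<phi> \<in> set fs. \<phi> \<in> C \<and> is_fix \<phi>) \<and>
     (\<forall>i. Suc i < length fs \<longrightarrow> Omega_g (fs ! i) < Omega_g (fs ! Suc i)
          \<and> odd (Omega_g (fs ! i)) \<noteq> odd (Omega_g (fs ! Suc i)))}"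

end

theory Submission
  imports Defs
begin


fun sz :: "'p fml \<Rightarrow> nat" where
  "sz (And a b) = Suc (sz a + sz b)"
| "sz (Or a b) = Suc (sz a + sz b)"
| "sz (Dia a) = Suc (sz a)"
| "sz (Box a) = Suc (sz a)"
| "sz (Fix e x a) = Suc (sz a)"
| "sz _ = 0"

inductive subterm :: "'p fml \<Rightarrow> 'p fml \<Rightarrow> bool" where
  st_refl: "subterm t t"
| st_andl: "subterm t a \<Longrightarrow> subterm t (And a b)"
| st_andr: "subterm t b \<Longrightarrow> subterm t (And a b)"
| st_orl: "subterm t a \<Longrightarrow> subterm t (Or a b)"
| st_orr: "subterm t b \<Longrightarrow> subterm t (Or a b)"
| st_dia: "subterm t a \<Longrightarrow> subterm t (Dia a)"
| st_box: "subterm t a \<Longrightarrow> subterm t (Box a)"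
| st_fix: "subterm t a \<Longrightarrow> subterm t (Fix e x a)"

lemma finite_FV: "finite (FV a)" by (induction a) auto
lemma finite_BV: "finite (BV a)" by (induction a) auto

lemma subst_nofree: "x \<notin> FV a \<Longrightarrow> subst a s x = a"
  by (induction a) auto

lemma FV_subst: "FV (subst a s x) \<subseteq> (FV a - {x}) \<union> FV s"
  by (induction a) auto

lemma BV_subst: "BV (subst a s x) \<subseteq> BV a \<union> BV s"
  by (induction a) auto

lemma step_FV: "step a b \<Longrightarrow> FV b \<subseteq> FV a"
  by (induction rule: step.induct) (use FV_subst in fastforce)+

lemma step_BV: "step a b \<Longrightarrow> BV b \<subseteq> BV a"
  by (induction rule: step.induct) (use BV_subst in fastforce)+

lemma steps_FV: "steps a b \<Longrightarrow> FV b \<subseteq> FV a"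
  by (induction rule: rtranclp_induct) (use step_FV in blast)+

lemma steps_BV: "steps a b \<Longrightarrow> BV b \<subseteq> BV a"
  by (induction rule: rtranclp_induct) (use step_BV in blast)+

lemma steps_tidy: "steps a b \<Longrightarrow> tidy a \<Longrightarrow> tidy b"
  unfolding tidy_def using steps_FV steps_BV by blast

lemma subterm_subst: "x \<in> FV a \<Longrightarrow> subterm s (subst a s x)"
  by (induction a) (auto intro: subterm.intros)

lemma free_sub_subterm: "free_sub t r \<Longrightarrow> subterm t r"
  unfolding free_sub_def using subterm_subst by blast

lemma subterm_sz: "subterm t r \<Longrightarrow> t = r \<or> sz t < sz r"
  by (induction rule: subterm.induct) auto

lemma subterm_trans0: "subterm b c \<Longrightarrow> subterm a b \<Longrightarrow> subterm a c"
  by (induction rule: subterm.induct) (auto intro: subterm.intros)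
lemma subterm_trans: "subterm a b \<Longrightarrow> subterm b c \<Longrightarrow> subterm a c"
  using subterm_trans0 by blast

lemma subterm_antisym: "subterm a b \<Longrightarrow> subterm b a \<Longrightarrow> a = b"
  using subterm_sz[of a b] subterm_sz[of b a] by auto

lemma subterm_BV: "subterm t r \<Longrightarrow> BV t \<subseteq> BV r"
  by (induction rule: subterm.induct) auto

lemma free_for_nofree: "y \<notin> FV b \<Longrightarrow> free_for t y b"
  by (induction b) auto

lemma subterm_ctx:
  "subterm t r \<Longrightarrow> y \<notin> FV r \<union> BV r \<Longrightarrow> BV r \<inter> FV t = {} \<Longrightarrow>
   \<exists>\<chi>. r = subst \<chi> t y \<and> y \<in> FV \<chi> \<and> free_for t y \<chi>"
proof (induction rule: subterm.induct)
  case (st_refl t)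
  then show ?case by (intro exI[of _ "Var y"]) auto
next
  case (st_andl t a b)
  then obtain c where "a = subst c t y" "y \<in> FV c" "free_for t y c" by auto
  then show ?case using st_andl.prems
    by (intro exI[of _ "And c b"]) (auto simp: subst_nofree free_for_nofree)
next
  case (st_andr t b a)
  then obtain c where "b = subst c t y" "y \<in> FV c" "free_for t y c" by auto
  then show ?case using st_andr.prems
    by (intro exI[of _ "And a c"]) (auto simp: subst_nofree free_for_nofree)
next
  case (st_orl t a b)
  then obtain c where "a = subst c t y" "y \<in> FV c" "free_for t y c" by auto
  then show ?case using st_orl.prems
    by (intro exI[of _ "Or c b"]) (auto simp: subst_nofree free_for_nofree)
next
  case (st_orr t b a)
  then obtain c where "b = subst c t y" "y \<in> FV c" "free_for t y c" by auto
  then show ?case using st_orr.prems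
    by (intro exI[of _ "Or a c"]) (auto simp: subst_nofree free_for_nofree)
next
  case (st_dia t a)
  then obtain c where "a = subst c t y" "y \<in> FV c" "free_for t y c" by auto
  then show ?case using st_dia.prems
    by (intro exI[of _ "Dia c"]) auto
next
  case (st_box t a)
  then obtain c where "a = subst c t y" "y \<in> FV c" "free_for t y c" by auto
  then show ?case using st_box.prems
    by (intro exI[of _ "Box c"]) auto
next
  case (st_fix t a e x)
  then have "y \<notin> FV a \<union> BV a" "BV a \<inter> FV t = {}" by auto
  with st_fix obtain c where c: "a = subst c t y" "y \<in> FV c" "free_for t y c" by auto
  have "x \<noteq> y" "x \<notin> FV t" using st_fix.prems by auto
  then show ?case using c
    by (intro exI[of _ "Fix e x c"]) auto
qed

lemma subterm_free_sub:
  assumes "subterm t r" "BV r \<inter> FV t = {}" shows "free_sub t r"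
proof -
  obtain y where "y \<notin> FV r \<union> BV r"
    using finite_FV finite_BV ex_new_if_finite[OF infinite_UNIV_nat] by (metis finite_Un)
  then show ?thesis using subterm_ctx[OF assms(1) _ assms(2)] unfolding free_sub_def by blast
qed

fun substs :: "'p fml \<Rightarrow> ('p fml \<times> nat) list \<Rightarrow> 'p fml" where
  "substs a [] = a"
| "substs a (p # L) = substs (subst a (fst p) (snd p)) L"

lemma substs_append: "substs a (L @ M) = substs (substs a L) M"
  by (induction L arbitrary: a) auto

lemma substs_nofree: "\<forall>p\<in>set L. snd p \<notin> FV t \<Longrightarrow> substs t L = t"
  by (induction L) (auto simp: subst_nofree)

lemma substs_And: "substs (And a b) L = And (substs a L) (substs b L)"
  by (induction L arbitrary: a b) auto
lemma substs_Or: "substs (Or a b) L = Or (substs a L) (substs b L)"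
  by (induction L arbitrary: a b) auto
lemma substs_Dia: "substs (Dia a) L = Dia (substs a L)"
  by (induction L arbitrary: a) auto
lemma substs_Box: "substs (Box a) L = Box (substs a L)"
  by (induction L arbitrary: a) auto
lemma substs_Fix: "substs (Fix e w c) L = Fix e w (substs c (filter (\<lambda>p. snd p \<noteq> w) L))"
  by (induction L arbitrary: c) auto

lemma steps_substs:
  "subterm t c \<Longrightarrow> BV c \<inter> FV t = {} \<Longrightarrow> \<forall>p\<in>set L. snd p \<notin> FV t \<Longrightarrow> steps (substs c L) t"
proof (induction arbitrary: L rule: subterm.induct)
  case (st_refl t)
  then show ?case by (simp add: substs_nofree)
next
  case (st_andl t a b)
  then have "steps (substs a L) t" by auto
  then show ?case by (simp add: substs_And) (meson converse_rtranclp_into_rtranclp step.and_l)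
next
  case (st_andr t b a)
  then have "steps (substs b L) t" by auto
  then show ?case by (simp add: substs_And) (meson converse_rtranclp_into_rtranclp step.and_r)
next
  case (st_orl t a b)
  then have "steps (substs a L) t" by auto
  then show ?case by (simp add: substs_Or) (meson converse_rtranclp_into_rtranclp step.or_l)
next
  case (st_orr t b a)
  then have "steps (substs b L) t" by auto
  then show ?case by (simp add: substs_Or) (meson converse_rtranclp_into_rtranclp step.or_r)
next
  case (st_dia t a)
  then have "steps (substs a L) t" by auto
  then show ?case by (simp add: substs_Dia) (meson converse_rtranclp_into_rtranclp step.dia)
next
  case (st_box t a)
  then have "steps (substs a L) t" by auto
  then show ?case by (simp add: substs_Box) (meson converse_rtranclp_into_rtranclp step.box)
next
  case (st_fix t a e x)
  define L' where "L' = filter (\<lambda>p. snd p \<noteq> x) L"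
  define F where "F = Fix e x (substs a L')"
  have x: "x \<notin> FV t" using st_fix.prems by auto
  have "steps (substs a (L' @ [(F, x)])) t"
    using st_fix x by (intro st_fix.IH) (auto simp: L'_def)
  moreover have "step F (substs a (L' @ [(F, x)]))"
    unfolding F_def substs_append by (simp add: step.unfold)
  ultimately show ?case unfolding substs_Fix L'_def[symmetric] F_def[symmetric]
    by (meson converse_rtranclp_into_rtranclp)
qed

lemma subterm_steps: "subterm t c \<Longrightarrow> BV c \<inter> FV t = {} \<Longrightarrow> steps c t"
  using steps_substs[of t c "[]"] by simp



fun realize :: "'p fml \<Rightarrow> (nat \<Rightarrow> 'p fml) \<Rightarrow> 'p fml" where
  "realize (Var y) \<sigma> = \<sigma> y"
| "realize (And a b) \<sigma> = And (realize a \<sigma>) (realize b \<sigma>)"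
| "realize (Or a b) \<sigma> = Or (realize a \<sigma>) (realize b \<sigma>)"
| "realize (Dia a) \<sigma> = Dia (realize a \<sigma>)"
| "realize (Box a) \<sigma> = Box (realize a \<sigma>)"
| "realize (Fix e x a) \<sigma> = Fix e x (realize a (\<sigma>(x := Var x)))"
| "realize Top \<sigma> = Top"
| "realize Bot \<sigma> = Bot"
| "realize (Prop p) \<sigma> = Prop p"
| "realize (NProp p) \<sigma> = NProp p"

fun cl :: "'p fml \<Rightarrow> (nat \<Rightarrow> 'p fml) \<Rightarrow> 'p fml set" where
  "cl (And a b) \<sigma> = insert (realize (And a b) \<sigma>) (cl a \<sigma> \<union> cl b \<sigma>)"
| "cl (Or a b) \<sigma> = insert (realize (Or a b) \<sigma>) (cl a \<sigma> \<union> cl b \<sigma>)"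
| "cl (Dia a) \<sigma> = insert (realize (Dia a) \<sigma>) (cl a \<sigma>)"
| "cl (Box a) \<sigma> = insert (realize (Box a) \<sigma>) (cl a \<sigma>)"
| "cl (Fix e x a) \<sigma> = insert (realize (Fix e x a) \<sigma>) (cl a (\<sigma>(x := realize (Fix e x a) \<sigma>)))"
| "cl t \<sigma> = {realize t \<sigma>}"

lemma finite_cl: "finite (cl a \<sigma>)"
  by (induction a arbitrary: \<sigma>) auto

lemma realize_Var: "realize a Var = a"
proof (induction a)
  case (Fix e x a)
  have "(Var(x := Var x)) = (Var :: nat \<Rightarrow> 'a fml)" by auto
  then show ?case using Fix by simp
qed auto

lemma realize_in: "realize a \<sigma> \<in> cl a \<sigma>"
  by (cases a) auto

lemma FV_realize0: "v \<in> FV (realize a \<sigma>) \<Longrightarrow> \<exists>z\<in>FV a. v \<in> FV (\<sigma> z)"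
proof (induction a arbitrary: \<sigma>)
  case (Fix e x c)
  then have v: "v \<in> FV (realize c (\<sigma>(x := Var x)))" "v \<noteq> x" by auto
  then obtain z where z: "z \<in> FV c" "v \<in> FV ((\<sigma>(x := Var x)) z)" using Fix.IH by blast
  show ?case
  proof (cases "z = x")
    case True then show ?thesis using z v by simp
  next
    case False then show ?thesis using z by (intro bexI[of _ z]) auto
  qed
next
  case (And a b) then show ?case by (auto dest!: And.IH)
next
  case (Or a b) then show ?case by (auto dest!: Or.IH)
next
  case (Dia a) then show ?case by (auto dest!: Dia.IH)
next
  case (Box a) then show ?case by (auto dest!: Box.IH)
qed auto

lemma FV_realize: "FV (realize a \<sigma>) \<subseteq> (\<Union>y\<in>FV a. FV (\<sigma> y))"
  using FV_realize0 by blast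

lemma subst_realize:
  "\<tau> x = Var x \<Longrightarrow> (\<forall>y\<in>FV a. y \<noteq> x \<longrightarrow> x \<notin> FV (\<tau> y)) \<Longrightarrow>
   subst (realize a \<tau>) R x = realize a (\<tau>(x := R))"
proof (induction a arbitrary: \<tau>)
  case (Var y)
  then show ?case by (auto simp: subst_nofree)
next
  case (Fix e w c)
  show ?case
  proof (cases "w = x")
    case True
    have e1: "\<tau>(x := R, x := Var x) = \<tau>" using Fix.prems(1) by (auto simp: fun_eq_iff)
    have e2: "\<tau>(x := Var x) = \<tau>" using Fix.prems(1) by (auto simp: fun_eq_iff)
    show ?thesis using True by (simp only: realize.simps subst.simps e1 e2) simp
  next
    case False
    have "subst (realize c (\<tau>(w := Var w))) R x = realize c (\<tau>(w := Var w, x := R))"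
      using Fix False by (intro Fix.IH) auto
    moreover have "\<tau>(w := Var w, x := R) = \<tau>(x := R, w := Var w)" using False by (rule fun_upd_twist)
    ultimately have "subst (realize (Fix e w c) \<tau>) R x = Fix e w (realize c (\<tau>(x := R, w := Var w)))"
      using False by simp
    also have "\<dots> = realize (Fix e w c) (\<tau>(x := R))" by (simp only: realize.simps)
    finally show ?thesis .
  qed
qed auto

lemma step_Fix_inv: "step (Fix e x a) r \<Longrightarrow> r = subst a (Fix e x a) x"
  by (cases rule: step.cases) auto

lemma cl_step:
  "BV a \<inter> V = {} \<Longrightarrow> (\<forall>y\<in>FV a. (\<sigma> y = Var y \<and> y \<in> V) \<or> FV (\<sigma> y) \<subseteq> V) \<Longrightarrow>
   r \<in> cl a \<sigma> \<Longrightarrow> step r r' \<Longrightarrow> r' \<in> cl a \<sigma> \<or> (\<exists>y\<in>FV a. r = \<sigma> y)"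
proof (induction a arbitrary: \<sigma> r)
  case (And a b)
  show ?case
  proof (cases "r = realize (And a b) \<sigma>")
    case True
    then show ?thesis using And.prems(4) realize_in[of a \<sigma>] realize_in[of b \<sigma>]
      by (auto elim: step.cases)
  next
    case False
    then have "r \<in> cl a \<sigma> \<or> r \<in> cl b \<sigma>" using And.prems(3) by auto
    then show ?thesis
    proof
      assume "r \<in> cl a \<sigma>"
      then show ?thesis using And.IH(1)[of \<sigma> r] And.prems by auto
    next
      assume "r \<in> cl b \<sigma>"
      then show ?thesis using And.IH(2)[of \<sigma> r] And.prems by auto
    qed
  qed
next
  case (Or a b)
  show ?case
  proof (cases "r = realize (Or a b) \<sigma>")
    case True
    then show ?thesis using Or.prems(4) realize_in[of a \<sigma>] realize_in[of b \<sigma>]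
      by (auto elim: step.cases)
  next
    case False
    then have "r \<in> cl a \<sigma> \<or> r \<in> cl b \<sigma>" using Or.prems(3) by auto
    then show ?thesis
    proof
      assume "r \<in> cl a \<sigma>"
      then show ?thesis using Or.IH(1)[of \<sigma> r] Or.prems by auto
    next
      assume "r \<in> cl b \<sigma>"
      then show ?thesis using Or.IH(2)[of \<sigma> r] Or.prems by auto
    qed
  qed
next
  case (Dia a)
  show ?case
  proof (cases "r = realize (Dia a) \<sigma>")
    case True
    then show ?thesis using Dia.prems(4) realize_in[of a \<sigma>]
      by (auto elim: step.cases)
  next
    case False
    then have "r \<in> cl a \<sigma>" using Dia.prems(3) by auto
    then show ?thesis using Dia.IH[of \<sigma> r] Dia.prems by auto
  qed
next
  case (Box a)
  show ?case
  proof (cases "r = realize (Box a) \<sigma>")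
    case True
    then show ?thesis using Box.prems(4) realize_in[of a \<sigma>]
      by (auto elim: step.cases)
  next
    case False
    then have "r \<in> cl a \<sigma>" using Box.prems(3) by auto
    then show ?thesis using Box.IH[of \<sigma> r] Box.prems by auto
  qed
next
  case (Fix e x c)
  define R where "R = realize (Fix e x c) \<sigma>"
  define \<sigma>' where "\<sigma>' = \<sigma>(x := R)"
  have xV: "x \<notin> V" using Fix.prems(1) by auto
  have FVR: "FV R \<subseteq> V"
  proof -
    have "FV R \<subseteq> (\<Union>y\<in>FV (Fix e x c). FV (\<sigma> y))" unfolding R_def by (rule FV_realize)
    also have "\<dots> \<subseteq> V" using Fix.prems(2) by fastforce
    finally show ?thesis .
  qed
  have Rstep: "r' \<in> cl c \<sigma>'" if "step R r'" for r'
  proof -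
    have "r' = subst (realize c (\<sigma>(x := Var x))) R x"
      using step_Fix_inv[of e x "realize c (\<sigma>(x := Var x))" r'] that by (simp add: R_def)
    also have "\<dots> = realize c (\<sigma>(x := Var x, x := R))"
    proof (rule subst_realize)
      show "\<forall>y\<in>FV c. y \<noteq> x \<longrightarrow> x \<notin> FV ((\<sigma>(x := Var x)) y)"
      proof (intro ballI impI)
        fix y assume y: "y \<in> FV c" "y \<noteq> x"
        then have "y \<in> FV (Fix e x c)" by simp
        then have "(\<sigma> y = Var y \<and> y \<in> V) \<or> FV (\<sigma> y) \<subseteq> V" using Fix.prems(2) by blast
        then show "x \<notin> FV ((\<sigma>(x := Var x)) y)" using y xV by auto
      qed
    qed simp
    finally show ?thesis using realize_in[of c \<sigma>'] by (simp add: \<sigma>'_def)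
  qed
  have prem1: "BV c \<inter> V = {}" using Fix.prems(1) by auto
  have prem2: "\<forall>y\<in>FV c. (\<sigma>' y = Var y \<and> y \<in> V) \<or> FV (\<sigma>' y) \<subseteq> V"
    using Fix.prems(2) FVR by (auto simp: \<sigma>'_def)
  show ?case
  proof (cases "r = R")
    case True
    then show ?thesis using Rstep Fix.prems(4) by (simp add: R_def \<sigma>'_def)
  next
    case False
    then have "r \<in> cl c \<sigma>'" using Fix.prems(3) by (simp add: R_def \<sigma>'_def)
    from Fix.IH[OF prem1 prem2 this Fix.prems(4)]
    have "r' \<in> cl c \<sigma>' \<or> (\<exists>y\<in>FV c. r = \<sigma>' y)" .
    then show ?thesis
    proof
      assume "r' \<in> cl c \<sigma>'" then show ?thesis by (simp add: R_def \<sigma>'_def)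
    next
      assume "\<exists>y\<in>FV c. r = \<sigma>' y"
      then obtain y where y: "y \<in> FV c" "r = \<sigma>' y" by blast
      show ?thesis
      proof (cases "y = x")
        case True then show ?thesis using y False by (simp add: \<sigma>'_def)
      next
        case False then show ?thesis using y by (auto simp: \<sigma>'_def)
      qed
    qed
  qed
qed (auto elim: step.cases)

lemma Clos_cl: assumes "tidy \<phi>" "steps \<phi> r" shows "r \<in> cl \<phi> Var"
  using assms(2)
proof (induction rule: rtranclp_induct)
  case base
  then show ?case using realize_in[of \<phi> Var] by (simp add: realize_Var)
next
  case (step r r')
  have "r' \<in> cl \<phi> Var \<or> (\<exists>y\<in>FV \<phi>. r = Var y)"
    using step assms(1) by (intro cl_step[where V = "FV \<phi>"]) (auto simp: tidy_def)
  then show ?case using step.hyps(2) by (auto elim: step.cases)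
qed

lemma finite_Clos: "tidy \<phi> \<Longrightarrow> finite {r. steps \<phi> r}"
  using Clos_cl finite_cl by (metis (mono_tags, lifting) finite_subset mem_Collect_eq subsetI)



definition adj :: "int \<Rightarrow> fpop \<Rightarrow> int" where
  "adj d e = (if has_parity d e then d else d + 1)"

lemma Omega_adj: "Omega_g \<psi> = adj (int (cd (cluster \<psi>)) - int (h_up \<psi>)) (fptype \<psi>)"
  unfolding Omega_g_def adj_def Let_def by simp

lemma adj_parity: "has_parity (adj d e) e"
  unfolding adj_def has_parity_def by auto

lemma adj_bounds: "d \<le> adj d e" "adj d e \<le> d + 1"
  unfolding adj_def by auto

lemma parity_unique: "has_parity d e1 \<Longrightarrow> has_parity d e2 \<Longrightarrow> e1 = e2"
  unfolding has_parity_def by (cases e1; cases e2) auto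

lemma adj_mono: "d1 \<le> d2 \<Longrightarrow> adj d1 e \<le> adj d2 e"
  unfolding adj_def has_parity_def by (cases "d1 = d2") auto

lemma adj_strict: "e1 \<noteq> e2 \<Longrightarrow> d1 < d2 \<Longrightarrow> adj d1 e1 < adj d2 e2"
proof -
  assume a: "e1 \<noteq> e2" "d1 < d2"
  have "adj d1 e1 \<le> adj d2 e2" using adj_bounds[of d1 e1] adj_bounds[of d2 e2] a by linarith
  moreover have "adj d1 e1 \<noteq> adj d2 e2"
    using adj_parity[of d1 e1] adj_parity[of d2 e2] parity_unique a(1) by metis
  ultimately show ?thesis by simp
qed

abbreviation Rin :: "'p fml \<Rightarrow> 'p fml \<Rightarrow> 'p fml \<Rightarrow> bool" where
  "Rin \<psi> \<equiv> (\<lambda>a b. step a b \<and> free_sub \<psi> a \<and> free_sub \<psi> b)"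

lemma Rin_steps: "(Rin \<psi>)\<^sup>*\<^sup>* a b \<Longrightarrow> steps a b"
  by (induction rule: rtranclp_induct) auto

lemma Rin_last: "(Rin \<psi>)\<^sup>*\<^sup>* a b \<Longrightarrow> free_sub \<psi> a \<Longrightarrow> free_sub \<psi> b"
  by (induction rule: rtranclp_induct) auto

lemma cle_steps: "cle a b \<Longrightarrow> steps b a"
  unfolding cle_def steps_in_def using Rin_steps by blast

lemma cle_subterm: "cle a b \<Longrightarrow> subterm b a"
  unfolding cle_def steps_in_def using Rin_last free_sub_subterm by blast

lemma cle_back: "cle a b \<Longrightarrow> tidy b \<Longrightarrow> steps a b"
proof -
  assume c: "cle a b" and t: "tidy b"
  have "BV a \<subseteq> BV b" using steps_BV cle_steps[OF c] by blast
  then have "BV a \<inter> FV b = {}" using t unfolding tidy_def by blast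
  then show ?thesis using subterm_steps cle_subterm[OF c] by blast
qed

lemma tidy_free_sub:
  assumes "tidy c" "steps c x" "subterm c x" shows "free_sub c x"
proof -
  have "BV x \<subseteq> BV c" using steps_BV assms(2) by blast
  then show ?thesis using assms unfolding tidy_def by (intro subterm_free_sub) blast+
qed

lemma Rin_trans_aux:
  assumes "(Rin b)\<^sup>*\<^sup>* b a" "steps c b" "subterm c b" "tidy c" "free_sub c b"
  shows "(Rin c)\<^sup>*\<^sup>* b a"
  using assms(1)
proof (induction rule: rtranclp_induct)
  case base then show ?case by simp
next
  case (step y z)
  have sy: "steps c y" using assms(2) Rin_steps[OF step.hyps(1)] by simp
  have sz': "steps c z" using sy step.hyps(2) by (simp add: rtranclp.rtrancl_into_rtrancl)
  have "free_sub c y" using tidy_free_sub[OF assms(4) sy] subterm_trans[OF assms(3)]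
      free_sub_subterm step.hyps(2) by blast
  moreover have "free_sub c z" using tidy_free_sub[OF assms(4) sz'] subterm_trans[OF assms(3)]
      free_sub_subterm step.hyps(2) by blast
  ultimately show ?case using step by (simp add: rtranclp.rtrancl_into_rtrancl)
qed

lemma cle_trans: "cle a b \<Longrightarrow> cle b c \<Longrightarrow> tidy c \<Longrightarrow> cle a c"
proof -
  assume ab: "cle a b" and bc: "cle b c" and t: "tidy c"
  have r1: "(Rin b)\<^sup>*\<^sup>* b a" using ab unfolding cle_def steps_in_def by simp
  have r2: "(Rin c)\<^sup>*\<^sup>* c b" and fc: "free_sub c c" using bc unfolding cle_def steps_in_def by auto
  have "free_sub c b" using Rin_last[OF r2 fc] .
  then have "(Rin c)\<^sup>*\<^sup>* b a"
    using Rin_trans_aux[OF r1 cle_steps[OF bc] cle_subterm[OF bc] t] by blast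
  then have "(Rin c)\<^sup>*\<^sup>* c a" using r2 by simp
  then show ?thesis using ab bc fc unfolding cle_def steps_in_def by simp
qed

lemma cle_antisym: "cle a b \<Longrightarrow> cle b a \<Longrightarrow> a = b"
  using cle_subterm subterm_antisym by blast

lemma clt_neq: "clt a b \<Longrightarrow> a \<noteq> b"
  unfolding clt_def by auto

lemma clt_sz: "clt a b \<Longrightarrow> sz b < sz a"
  using clt_neq[of a b] cle_subterm[of a b] subterm_sz unfolding clt_def by blast

lemma cluster_eq: "steps a b \<Longrightarrow> steps b a \<Longrightarrow> cluster a = cluster b"
  unfolding cluster_def by (auto intro: rtranclp_trans)

lemma self_cluster: "a \<in> cluster a"
  unfolding cluster_def by simp

lemma cluster_mem: "a \<in> cluster b \<Longrightarrow> cluster a = cluster b"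
  unfolding cluster_def by (auto intro: cluster_eq rtranclp_trans)

lemma alt_chain_Cons:
  "alt_chain (a # cs) \<longleftrightarrow> tidy a \<and> is_fix a \<and> alt_chain cs \<and>
     (cs \<noteq> [] \<longrightarrow> clt a (hd cs) \<and> fptype (hd cs) \<noteq> fptype a)"
proof -
  have "(\<forall>i. Suc i < length (a # cs) \<longrightarrow> clt ((a # cs) ! i) ((a # cs) ! Suc i)
                               \<and> fptype ((a # cs) ! Suc i) \<noteq> fptype ((a # cs) ! i))
   \<longleftrightarrow> (cs \<noteq> [] \<longrightarrow> clt a (hd cs) \<and> fptype (hd cs) \<noteq> fptype a) \<and>
       (\<forall>i. Suc i < length cs \<longrightarrow> clt (cs ! i) (cs ! Suc i)
                               \<and> fptype (cs ! Suc i) \<noteq> fptype (cs ! i))" (is "?L = ?R")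
  proof
    assume L: ?L
    have "cs \<noteq> [] \<longrightarrow> clt a (hd cs) \<and> fptype (hd cs) \<noteq> fptype a"
      using L[rule_format, of 0] by (cases cs) auto
    moreover have "\<forall>i. Suc i < length cs \<longrightarrow> clt (cs ! i) (cs ! Suc i)
                               \<and> fptype (cs ! Suc i) \<noteq> fptype (cs ! i)"
      using L by (metis Suc_less_eq length_Cons nth_Cons_Suc)
    ultimately show ?R by blast
  next
    assume R: ?R
    show ?L
    proof (intro allI impI)
      fix i assume i: "Suc i < length (a # cs)"
      show "clt ((a # cs) ! i) ((a # cs) ! Suc i) \<and> fptype ((a # cs) ! Suc i) \<noteq> fptype ((a # cs) ! i)"
      proof (cases i)
        case 0 then show ?thesis using R i by (cases cs) auto
      next
        case (Suc j) then show ?thesis using R i by auto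
      qed
    qed
  qed
  then show ?thesis unfolding alt_chain_def by auto
qed

lemma alt_chain_Nil: "alt_chain []"
  unfolding alt_chain_def by simp

lemma alt_chain_sz: "alt_chain cs \<Longrightarrow> i \<le> j \<Longrightarrow> j < length cs \<Longrightarrow> sz (cs ! j) + (j - i) \<le> sz (cs ! i)"
proof (induction j)
  case 0 then show ?case by simp
next
  case (Suc j)
  show ?case
  proof (cases "i = Suc j")
    case True then show ?thesis by simp
  next
    case False
    then have "i \<le> j" using Suc by simp
    then have "sz (cs ! j) + (j - i) \<le> sz (cs ! i)" using Suc by simp
    moreover have "clt (cs ! j) (cs ! Suc j)" using Suc.prems unfolding alt_chain_def by blast
    then have "sz (cs ! Suc j) < sz (cs ! j)" by (rule clt_sz)
    ultimately show ?thesis using \<open>i \<le> j\<close> by linarith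
  qed
qed

lemma alt_chain_len: "alt_chain cs \<Longrightarrow> cs \<noteq> [] \<Longrightarrow> length cs \<le> Suc (sz (hd cs))"
proof -
  assume a: "alt_chain cs" "cs \<noteq> []"
  have "sz (cs ! (length cs - 1)) + (length cs - 1 - 0) \<le> sz (cs ! 0)"
    using a by (intro alt_chain_sz) auto
  then show ?thesis using a by (simp add: hd_conv_nth)
qed

lemma alt_chain_distinct: "alt_chain cs \<Longrightarrow> distinct cs"
proof -
  assume a: "alt_chain cs"
  show ?thesis unfolding distinct_conv_nth
  proof (intro allI impI)
    fix i j assume ij: "i < length cs" "j < length cs" "i \<noteq> j"
    show "cs ! i \<noteq> cs ! j"
    proof (cases "i < j")
      case True
      then have "sz (cs ! j) + (j - i) \<le> sz (cs ! i)" using a ij by (intro alt_chain_sz) auto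
      then show ?thesis using True by auto
    next
      case False
      then have "sz (cs ! i) + (i - j) \<le> sz (cs ! j)" using a ij by (intro alt_chain_sz) auto
      then show ?thesis using False ij by auto
    qed
  qed
qed

definition HS :: "'p fml \<Rightarrow> nat set" where
  "HS \<xi> = {length cs | cs. alt_chain cs \<and> cs \<noteq> [] \<and> hd cs = \<xi>}"

lemma h_up_HS: "h_up \<xi> = Max (HS \<xi>)" unfolding h_up_def HS_def by simp

lemma HS_finite: "finite (HS \<xi>)"
proof -
  have "HS \<xi> \<subseteq> {..Suc (sz \<xi>)}" unfolding HS_def using alt_chain_len by fastforce
  then show ?thesis using finite_subset by blast
qed

lemma HS_ne: "tidy \<xi> \<Longrightarrow> is_fix \<xi> \<Longrightarrow> 1 \<in> HS \<xi>"
  unfolding HS_def by (rule CollectI, rule exI[of _ "[\<xi>]"]) (auto simp: alt_chain_Cons alt_chain_Nil)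

lemma h_up_ge: "alt_chain cs \<Longrightarrow> cs \<noteq> [] \<Longrightarrow> length cs \<le> h_up (hd cs)"
  unfolding h_up_HS using HS_finite unfolding HS_def by (intro Max_ge) auto

lemma h_up_ex: "tidy \<xi> \<Longrightarrow> is_fix \<xi> \<Longrightarrow>
  \<exists>cs. alt_chain cs \<and> cs \<noteq> [] \<and> hd cs = \<xi> \<and> length cs = h_up \<xi>"
proof -
  assume "tidy \<xi>" "is_fix \<xi>"
  then have "h_up \<xi> \<in> HS \<xi>" unfolding h_up_HS using HS_finite HS_ne by (intro Max_in) auto
  then show ?thesis unfolding HS_def by auto
qed

lemma h_up_pos: "tidy \<xi> \<Longrightarrow> is_fix \<xi> \<Longrightarrow> 1 \<le> h_up \<xi>"
  using HS_ne HS_finite unfolding h_up_HS by (intro Max_ge) auto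

lemma h_up_mono:
  assumes t: "tidy \<phi>" "is_fix \<phi>" "tidy \<psi>" "is_fix \<psi>" and c: "cle \<phi> \<psi>"
  shows "h_up \<psi> \<le> h_up \<phi> \<and> (fptype \<phi> \<noteq> fptype \<psi> \<longrightarrow> h_up \<psi> < h_up \<phi>)"
proof -
  obtain cs where cs: "alt_chain cs" "cs \<noteq> []" "hd cs = \<psi>" "length cs = h_up \<psi>"
    using h_up_ex[OF t(3,4)] by blast
  show ?thesis
  proof (cases "fptype \<phi> = fptype \<psi>")
    case False
    have "\<not> cle \<psi> \<phi>" using cle_antisym c False by blast
    then have "clt \<phi> \<psi>" using c unfolding clt_def by simp
    then have "alt_chain (\<phi> # cs)" using cs t False by (simp add: alt_chain_Cons)
    then have "length (\<phi> # cs) \<le> h_up \<phi>" using h_up_ge by fastforce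
    then show ?thesis using cs False by simp
  next
    case True
    note same = True
    obtain cs' where cs': "cs = \<psi> # cs'" using cs by (cases cs) auto
    show ?thesis
    proof (cases "cs' = []")
      case True
      then show ?thesis using h_up_pos[OF t(1,2)] cs cs' same by simp
    next
      case False
      let ?c = "hd cs'"
      have ac: "alt_chain cs'" "clt \<psi> ?c" "fptype ?c \<noteq> fptype \<psi>"
        using cs(1) False unfolding cs' alt_chain_Cons by auto
      have tc: "tidy ?c" using ac(1) False unfolding alt_chain_def by (simp add: hd_in_set)
      have "cle \<phi> ?c" using cle_trans[OF c _ tc] ac(2) unfolding clt_def by blast
      moreover have "\<not> cle ?c \<phi>"
      proof
        assume "cle ?c \<phi>"
        then have "cle ?c \<psi>" using cle_trans[OF _ c t(3)] by blast
        then show False using ac(2) unfolding clt_def by blast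
      qed
      ultimately have "clt \<phi> ?c" unfolding clt_def by simp
      then have "alt_chain (\<phi> # cs')" using ac t same False by (simp add: alt_chain_Cons)
      then have "length (\<phi> # cs') \<le> h_up \<phi>" using h_up_ge by fastforce
      then show ?thesis using cs cs' same by simp
    qed
  qed
qed

lemma part2:
  assumes t: "tidy \<phi>" "is_fix \<phi>" "tidy \<psi>" "is_fix \<psi>" and c: "cle \<phi> \<psi>"
  shows "Omega_g \<phi> \<le> Omega_g \<psi> \<and> (fptype \<phi> \<noteq> fptype \<psi> \<longrightarrow> Omega_g \<phi> < Omega_g \<psi>)"
proof -
  have cl: "cluster \<phi> = cluster \<psi>" using cluster_eq[OF cle_back[OF c t(3)] cle_steps[OF c]] .
  have h: "h_up \<psi> \<le> h_up \<phi> \<and> (fptype \<phi> \<noteq> fptype \<psi> \<longrightarrow> h_up \<psi> < h_up \<phi>)"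
    using h_up_mono[OF assms] .
  define n where "n = int (cd (cluster \<psi>))"
  have O1: "Omega_g \<phi> = adj (n - int (h_up \<phi>)) (fptype \<phi>)" using cl by (simp add: Omega_adj n_def)
  have O2: "Omega_g \<psi> = adj (n - int (h_up \<psi>)) (fptype \<psi>)" by (simp add: Omega_adj n_def)
  show ?thesis
  proof (cases "fptype \<phi> = fptype \<psi>")
    case True
    have "n - int (h_up \<phi>) \<le> n - int (h_up \<psi>)" using h by simp
    then show ?thesis unfolding O1 O2 using True adj_mono by auto
  next
    case False
    then show ?thesis unfolding O1 O2 using h adj_strict[OF False] by (intro conjI) (auto intro: less_imp_le)
  qed
qed

lemma part1: "has_parity (Omega_g \<xi>) (fptype \<xi>)"
  unfolding Omega_adj by (rule adj_parity)



lemma subterm_And: "subterm t (And a b) \<longleftrightarrow> t = And a b \<or> subterm t a \<or> subterm t b"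
  by (auto elim: subterm.cases intro: subterm.intros)
lemma subterm_Or: "subterm t (Or a b) \<longleftrightarrow> t = Or a b \<or> subterm t a \<or> subterm t b"
  by (auto elim: subterm.cases intro: subterm.intros)
lemma subterm_Dia: "subterm t (Dia a) \<longleftrightarrow> t = Dia a \<or> subterm t a"
  by (auto elim: subterm.cases intro: subterm.intros)
lemma subterm_Box: "subterm t (Box a) \<longleftrightarrow> t = Box a \<or> subterm t a"
  by (auto elim: subterm.cases intro: subterm.intros)
lemma subterm_Fix: "subterm t (Fix e x a) \<longleftrightarrow> t = Fix e x a \<or> subterm t a"
  by (auto elim: subterm.cases intro: subterm.intros)
lemma subterm_Var: "subterm t (Var y) \<longleftrightarrow> t = Var y"
  by (auto elim: subterm.cases intro: subterm.intros)
lemma subterm_atoms: "subterm t Top \<longleftrightarrow> t = Top" "subterm t Bot \<longleftrightarrow> t = Bot"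
  "subterm t (Prop p) \<longleftrightarrow> t = Prop p" "subterm t (NProp p) \<longleftrightarrow> t = NProp p"
  by (auto elim: subterm.cases intro: subterm.intros)

lemmas subterm_inv = subterm_And subterm_Or subterm_Dia subterm_Box subterm_Fix subterm_Var subterm_atoms

lemma sz_subst: "z \<in> FV a \<Longrightarrow> a = Var z \<or> sz s < sz (subst a s z)"
  by (induction a) (auto split: if_splits)

lemma whole_case: "a \<noteq> Var z \<Longrightarrow> subst a s z = a \<or> sz s < sz (subst a s z)"
  using sz_subst subst_nofree by metis

lemma subterm_subst_cases:
  "subterm t (subst a s z) \<Longrightarrow> subterm t s \<or> subterm t a \<or> sz s < sz t"
proof (induction a)
  case (Var y)
  then show ?case by (auto split: if_splits simp: subterm_inv)
next
  case (And a b)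
  have w: "subst (And a b) s z = And a b \<or> sz s < sz (subst (And a b) s z)"
    by (rule whole_case) simp
  from And.prems have "t = subst (And a b) s z \<or> subterm t (subst a s z) \<or> subterm t (subst b s z)"
    by (simp add: subterm_inv)
  then show ?case using And.IH w by (auto simp: subterm_inv simp del: subst.simps)
next
  case (Or a b)
  have w: "subst (Or a b) s z = Or a b \<or> sz s < sz (subst (Or a b) s z)"
    by (rule whole_case) simp
  from Or.prems have "t = subst (Or a b) s z \<or> subterm t (subst a s z) \<or> subterm t (subst b s z)"
    by (simp add: subterm_inv)
  then show ?case using Or.IH w by (auto simp: subterm_inv simp del: subst.simps)
next
  case (Dia a)
  have w: "subst (Dia a) s z = Dia a \<or> sz s < sz (subst (Dia a) s z)"
    by (rule whole_case) simp
  from Dia.prems have "t = subst (Dia a) s z \<or> subterm t (subst a s z)"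
    by (simp add: subterm_inv)
  then show ?case using Dia.IH w by (auto simp: subterm_inv simp del: subst.simps)
next
  case (Box a)
  have w: "subst (Box a) s z = Box a \<or> sz s < sz (subst (Box a) s z)"
    by (rule whole_case) simp
  from Box.prems have "t = subst (Box a) s z \<or> subterm t (subst a s z)"
    by (simp add: subterm_inv)
  then show ?case using Box.IH w by (auto simp: subterm_inv simp del: subst.simps)
next
  case (Fix e w a)
  show ?case
  proof (cases "w = z")
    case True
    then show ?thesis using Fix.prems by simp
  next
    case False
    have wc: "subst (Fix e w a) s z = Fix e w a \<or> sz s < sz (subst (Fix e w a) s z)"
      by (rule whole_case) simp
    from Fix.prems False have "t = subst (Fix e w a) s z \<or> subterm t (subst a s z)"
      by (simp add: subterm_inv)
    then show ?thesis using Fix.IH wc by (auto simp: subterm_inv simp del: subst.simps)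
  qed
qed (auto simp: subterm_inv)

lemma chain_cluster: "alt_chain cs \<Longrightarrow> cs \<noteq> [] \<Longrightarrow> set cs \<subseteq> cluster (hd cs)"
proof (induction cs)
  case Nil then show ?case by simp
next
  case (Cons a cs)
  show ?case
  proof (cases "cs = []")
    case True then show ?thesis using self_cluster by simp
  next
    case False
    have ac: "alt_chain cs" "clt a (hd cs)" "tidy (hd cs)"
      using Cons.prems False unfolding alt_chain_Cons by (auto simp: alt_chain_def hd_in_set)
    have "cle a (hd cs)" using ac unfolding clt_def by simp
    then have "cluster a = cluster (hd cs)"
      using cluster_eq cle_back cle_steps ac(3) by metis
    then show ?thesis using Cons.IH[OF ac(1) False] self_cluster[of a] by simp
  qed
qed

lemma alt_chain_snoc:
  assumes "alt_chain cs" "cs \<noteq> []" "tidy t" "is_fix t" "clt (last cs) t" "fptype t \<noteq> fptype (last cs)"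
  shows "alt_chain (cs @ [t])"
  unfolding alt_chain_def
proof (rule conjI)
  show "\<forall>\<phi>\<in>set (cs @ [t]). tidy \<phi> \<and> is_fix \<phi>" using assms unfolding alt_chain_def by auto
next
  show "\<forall>i. Suc i < length (cs @ [t]) \<longrightarrow> clt ((cs @ [t]) ! i) ((cs @ [t]) ! Suc i) \<and> fptype ((cs @ [t]) ! Suc i) \<noteq> fptype ((cs @ [t]) ! i)"
  proof (intro allI impI)
  fix i assume i: "Suc i < length (cs @ [t])"
  show "clt ((cs @ [t]) ! i) ((cs @ [t]) ! Suc i) \<and> fptype ((cs @ [t]) ! Suc i) \<noteq> fptype ((cs @ [t]) ! i)"
  proof (cases "Suc i < length cs")
    case True
    then show ?thesis using assms(1) unfolding alt_chain_def by (simp add: nth_append)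
  next
    case False
    then have "i = length cs - 1" using i by simp
    then have "(cs @ [t]) ! i = last cs" "(cs @ [t]) ! Suc i = t"
      using assms(2) by (auto simp: nth_append last_conv_nth)
    then show ?thesis using assms by simp
  qed
  qed
qed

lemma alt_types: "alt_chain cs \<Longrightarrow> i < length cs \<Longrightarrow> has_parity 0 (fptype (cs ! 0)) \<Longrightarrow>
  has_parity (int i) (fptype (cs ! i))"
proof (induction i)
  case 0 then show ?case by simp
next
  case (Suc i)
  then have h: "has_parity (int i) (fptype (cs ! i))" by simp
  have "fptype (cs ! Suc i) \<noteq> fptype (cs ! i)" using Suc.prems unfolding alt_chain_def by blast
  then show ?case using h unfolding has_parity_def
    by (cases "fptype (cs ! Suc i)"; cases "fptype (cs ! i)") auto
qed

lemma parity_diff: "has_parity a e1 \<Longrightarrow> has_parity b e2 \<Longrightarrow> e1 \<noteq> e2 \<Longrightarrow> odd a \<noteq> odd b"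
  unfolding has_parity_def by (cases e1; cases e2) auto



lemma part3:
  assumes T: "\<forall>\<psi> \<in> cluster \<phi>. tidy \<psi>"
  shows "cd (cluster \<phi>) = ind (cluster \<phi>) \<and>
         ind (cluster \<phi>) = card (Omega_g ` {\<psi> \<in> cluster \<phi>. is_fix \<psi>})"
proof -
  define C where "C = cluster \<phi>"
  define Fx where "Fx = {\<psi> \<in> C. is_fix \<psi>}"
  have T': "\<And>\<psi>. \<psi> \<in> C \<Longrightarrow> tidy \<psi>" using T C_def by blast
  have phiC: "\<phi> \<in> C" unfolding C_def by (rule self_cluster)
  have tphi: "tidy \<phi>" using T' phiC .
  have memC: "\<And>\<psi>. \<psi> \<in> C \<longleftrightarrow> steps \<phi> \<psi> \<and> steps \<psi> \<phi>" unfolding C_def cluster_def by simp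
  have finC: "finite C"
  proof -
    have "C \<subseteq> {r. steps \<phi> r}" using memC by blast
    then show ?thesis using finite_Clos[OF tphi] finite_subset by blast
  qed
  have finFx: "finite Fx" unfolding Fx_def using finC by simp
  have clC: "\<And>\<xi>. \<xi> \<in> C \<Longrightarrow> cluster \<xi> = C" unfolding C_def by (rule cluster_mem)
  define CS where "CS = {length cs | cs. alt_chain cs \<and> set cs \<subseteq> C}"
  have cdCS: "cd C = Max CS" unfolding cd_def CS_def by simp
  have CSsub: "CS \<subseteq> {..card C}"
  proof
    fix k assume "k \<in> CS"
    then obtain cs where cs: "k = length cs" "alt_chain cs" "set cs \<subseteq> C" unfolding CS_def by blast
    have "length cs = card (set cs)" using alt_chain_distinct[OF cs(2)] distinct_card by metis
    also have "\<dots> \<le> card C" using card_mono[OF finC cs(3)] .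
    finally show "k \<in> {..card C}" using cs by simp
  qed
  have CSfin: "finite CS" using CSsub finite_subset by blast
  have CSne: "0 \<in> CS" unfolding CS_def using alt_chain_Nil by force
  have cd_ge: "\<And>cs. alt_chain cs \<Longrightarrow> set cs \<subseteq> C \<Longrightarrow> length cs \<le> cd C"
    unfolding cdCS using CSfin by (intro Max_ge) (auto simp: CS_def)
  obtain mcs where mcs: "alt_chain mcs" "set mcs \<subseteq> C" "length mcs = cd C"
  proof -
    have "Max CS \<in> CS" using CSfin CSne by (intro Max_in) auto
    then obtain cs where "alt_chain cs" "set cs \<subseteq> C" "length cs = Max CS"
      unfolding CS_def by auto
    then show ?thesis using that cdCS by simp
  qed
  have chainC: "\<And>\<xi> cs. \<xi> \<in> C \<Longrightarrow> alt_chain cs \<Longrightarrow> cs \<noteq> [] \<Longrightarrow> hd cs = \<xi> \<Longrightarrow> set cs \<subseteq> C"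
    using chain_cluster clC by metis
  have h_le: "\<And>\<xi>. \<xi> \<in> Fx \<Longrightarrow> h_up \<xi> \<le> cd C"
  proof -
    fix \<xi> assume x: "\<xi> \<in> Fx"
    then have "\<xi> \<in> C" "tidy \<xi>" "is_fix \<xi>" using T' unfolding Fx_def by auto
    then obtain cs where "alt_chain cs" "cs \<noteq> []" "hd cs = \<xi>" "length cs = h_up \<xi>"
      using h_up_ex by blast
    then show "h_up \<xi> \<le> cd C" using cd_ge chainC \<open>\<xi> \<in> C\<close> by metis
  qed
  have OmF: "\<And>\<xi>. \<xi> \<in> Fx \<Longrightarrow> Omega_g \<xi> = adj (int (cd C) - int (h_up \<xi>)) (fptype \<xi>)"
    using clC unfolding Fx_def by (simp add: Omega_adj)
  define IS where "IS = {length fs | fs. (\<forall>\<phi> \<in> set fs. \<phi> \<in> C \<and> is_fix \<phi>) \<and>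
     (\<forall>i. Suc i < length fs \<longrightarrow> Omega_g (fs ! i) < Omega_g (fs ! Suc i)
          \<and> odd (Omega_g (fs ! i)) \<noteq> odd (Omega_g (fs ! Suc i)))}"
  have indIS: "ind C = Max IS" unfolding ind_def IS_def by simp
  have finOm: "finite (Omega_g ` Fx)" using finFx by simp
  have ISsub: "IS \<subseteq> {..card (Omega_g ` Fx)}"
  proof
    fix k assume "k \<in> IS"
    then obtain fs where fs: "k = length fs" "\<forall>\<phi> \<in> set fs. \<phi> \<in> C \<and> is_fix \<phi>"
      "\<forall>i. Suc i < length fs \<longrightarrow> Omega_g (fs ! i) < Omega_g (fs ! Suc i)"
      unfolding IS_def by blast
    have "sorted_wrt (<) (map Omega_g fs)"
      using fs(3) by (subst sorted_wrt_iff_nth_Suc_transp) (auto simp: transp_def)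
    then have "distinct (map Omega_g fs)" using strict_sorted_iff by blast
    then have "length fs = card (set (map Omega_g fs))" using distinct_card by fastforce
    also have "\<dots> \<le> card (Omega_g ` Fx)"
      using fs(2) finOm by (intro card_mono) (auto simp: Fx_def)
    finally show "k \<in> {..card (Omega_g ` Fx)}" using fs by simp
  qed
  have ISfin: "finite IS" using ISsub finite_subset by blast
  have ISne: "0 \<in> IS" unfolding IS_def by force
  have ind_le: "ind C \<le> card (Omega_g ` Fx)"
  proof -
    have "Max IS \<in> IS" using ISfin ISne by (intro Max_in) auto
    then show ?thesis using ISsub indIS by auto
  qed
  have cd_le_ind: "cd C \<le> ind C"
  proof -
    have A1: "\<forall>\<phi>\<in>set mcs. \<phi> \<in> C \<and> is_fix \<phi>" using mcs unfolding alt_chain_def by blast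
    have A2: "\<forall>i. Suc i < length mcs \<longrightarrow> Omega_g (mcs ! i) < Omega_g (mcs ! Suc i) \<and>
          odd (Omega_g (mcs ! i)) \<noteq> odd (Omega_g (mcs ! Suc i))"
    proof (intro allI impI)
      fix i assume i: "Suc i < length mcs"
      have c: "clt (mcs ! i) (mcs ! Suc i)" "fptype (mcs ! Suc i) \<noteq> fptype (mcs ! i)"
        using mcs(1) i unfolding alt_chain_def by blast+
      have t: "tidy (mcs ! i)" "is_fix (mcs ! i)" "tidy (mcs ! Suc i)" "is_fix (mcs ! Suc i)"
        using mcs(1) i unfolding alt_chain_def by auto
      have "Omega_g (mcs ! i) < Omega_g (mcs ! Suc i)"
        using part2[OF t] c unfolding clt_def by auto
      moreover have "odd (Omega_g (mcs ! i)) \<noteq> odd (Omega_g (mcs ! Suc i))"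
        using parity_diff[OF part1 part1] c(2) by metis
      ultimately show "Omega_g (mcs ! i) < Omega_g (mcs ! Suc i) \<and>
          odd (Omega_g (mcs ! i)) \<noteq> odd (Omega_g (mcs ! Suc i))" by simp
    qed
    have "length mcs \<in> IS" unfolding IS_def using A1 A2 by blast
    then show ?thesis unfolding indIS using ISfin mcs(3) by (metis Max_ge)
  qed
  have card_le: "card (Omega_g ` Fx) \<le> cd C"
  proof (cases "Fx = {}")
    case True then show ?thesis by simp
  next
    case False
    then obtain \<xi>0 where "\<xi>0 \<in> Fx" by blast
    then obtain \<tau> where tau: "\<tau> \<in> Fx" "\<And>\<xi>. \<xi> \<in> Fx \<Longrightarrow> sz \<tau> \<le> sz \<xi>"
      using ex_has_least_nat[of "\<lambda>x. x \<in> Fx" \<xi>0 sz] by blast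
    have tauC: "\<tau> \<in> C" and ttau: "tidy \<tau>" and ftau: "is_fix \<tau>"
      using tau(1) T' unfolding Fx_def by auto
    have P0: "steps \<rho> \<tau> \<Longrightarrow> \<rho> \<in> C \<Longrightarrow> subterm \<tau> \<rho>" for \<rho>
    proof (induction rule: converse_rtranclp_induct)
      case base show ?case by (rule subterm.st_refl)
    next
      case (step \<rho> \<rho>')
      have "steps \<phi> \<rho>'" using step.prems step.hyps(1) memC
        by (meson rtranclp.rtrancl_into_rtrancl)
      moreover have "steps \<rho>' \<phi>" using step.hyps(2) tauC memC by (meson rtranclp_trans)
      ultimately have "\<rho>' \<in> C" using memC by blast
      then have st: "subterm \<tau> \<rho>'" using step.IH by blast
      from step.hyps(1) show ?case
      proof (cases rule: step.cases)
        case (unfold e x a)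
        then have "subterm \<tau> \<rho> \<or> subterm \<tau> a \<or> sz \<rho> < sz \<tau>"
          using subterm_subst_cases[of \<tau> a \<rho> x] st by simp
        moreover have "\<rho> \<in> Fx" using step.prems unfold unfolding Fx_def by simp
        then have "\<not> sz \<rho> < sz \<tau>" using tau(2) by force
        ultimately show ?thesis using unfold by (auto intro: subterm.intros)
      qed (use st in \<open>auto intro: subterm.intros\<close>)
    qed
    have P: "\<And>\<rho>. \<rho> \<in> C \<Longrightarrow> subterm \<tau> \<rho>"
      using P0 memC tauC by (meson rtranclp_trans)
    have R0: "steps \<tau> \<rho> \<Longrightarrow> \<rho> \<in> C \<Longrightarrow> (Rin \<tau>)\<^sup>*\<^sup>* \<tau> \<rho>" for \<rho>
    proof (induction rule: rtranclp_induct)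
      case base then show ?case by simp
    next
      case (step y z)
      have "steps \<phi> y" using step.hyps(1) tauC memC by (meson rtranclp_trans)
      moreover have "steps y \<phi>" using step.hyps(2) step.prems memC
        by (meson converse_rtranclp_into_rtranclp)
      ultimately have yC: "y \<in> C" using memC by blast
      have "free_sub \<tau> y" using tidy_free_sub[OF ttau step.hyps(1) P[OF yC]] .
      moreover have "free_sub \<tau> z"
        using tidy_free_sub[OF ttau _ P[OF step.prems]] step.hyps
        by (meson rtranclp.rtrancl_into_rtrancl)
      moreover have "(Rin \<tau>)\<^sup>*\<^sup>* \<tau> y" using step.IH yC by blast
      ultimately show ?case using step.hyps(2) rtranclp.rtrancl_into_rtrancl[of "Rin \<tau>" \<tau> y z] by blast
    qed
    have cle_tau: "\<And>\<xi>. \<xi> \<in> Fx \<Longrightarrow> cle \<xi> \<tau>"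
    proof -
      fix \<xi> assume x: "\<xi> \<in> Fx"
      then have "\<xi> \<in> C" "is_fix \<xi>" unfolding Fx_def by auto
      then have "steps \<tau> \<xi>" using tauC memC by (meson rtranclp_trans)
      then have "(Rin \<tau>)\<^sup>*\<^sup>* \<tau> \<xi>" using R0 \<open>\<xi> \<in> C\<close> by blast
      moreover have "free_sub \<tau> \<tau>" using tidy_free_sub[OF ttau] subterm.st_refl by blast
      ultimately show "cle \<xi> \<tau>" unfolding cle_def steps_in_def using \<open>is_fix \<xi>\<close> ftau by simp
    qed
    have htau: "h_up \<tau> = 1"
    proof -
      obtain cs where cs: "alt_chain cs" "cs \<noteq> []" "hd cs = \<tau>" "length cs = h_up \<tau>"
        using h_up_ex[OF ttau ftau] by blast
      obtain cs' where cs': "cs = \<tau> # cs'" using cs by (cases cs) auto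
      have "cs' = []"
      proof (rule ccontr)
        assume ne: "cs' \<noteq> []"
        have a: "clt \<tau> (hd cs')" "is_fix (hd cs')" using cs(1) ne unfolding cs' alt_chain_Cons
          by (auto simp: alt_chain_def hd_in_set)
        have "hd cs' \<in> C" using chainC[OF tauC cs(1,2,3)] ne cs' by auto
        then have "cle (hd cs') \<tau>" using cle_tau a(2) unfolding Fx_def by blast
        then show False using a(1) unfolding clt_def by blast
      qed
      then show ?thesis using cs cs' by simp
    qed
    define n where "n = cd C"
    have n1: "1 \<le> n" using h_le[OF tau(1)] htau n_def by simp
    have Otau: "Omega_g \<tau> = adj (int n - 1) (fptype \<tau>)" using OmF[OF tau(1)] htau n_def by simp
    have Obnd: "\<And>\<xi>. \<xi> \<in> Fx \<Longrightarrow> 0 \<le> Omega_g \<xi> \<and> Omega_g \<xi> \<le> Omega_g \<tau>"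
    proof -
      fix \<xi> assume x: "\<xi> \<in> Fx"
      have "int (h_up \<xi>) \<le> int n" using h_le[OF x] n_def by simp
      then have "0 \<le> Omega_g \<xi>" using OmF[OF x] adj_bounds(1) n_def by (metis diff_ge_0_iff_ge order_trans)
      moreover have "Omega_g \<xi> \<le> Omega_g \<tau>"
        using part2[of \<xi> \<tau>] cle_tau[OF x] x ttau ftau T' unfolding Fx_def by auto
      ultimately show "0 \<le> Omega_g \<xi> \<and> Omega_g \<xi> \<le> Omega_g \<tau>" by simp
    qed
    show ?thesis
    proof (cases "has_parity (int n - 1) (fptype \<tau>)")
      case True
      then have "Omega_g \<tau> = int n - 1" using Otau unfolding adj_def by simp
      then have "Omega_g ` Fx \<subseteq> {0..int n - 1}" using Obnd by fastforce
      then have "card (Omega_g ` Fx) \<le> card {0..int n - 1}" by (intro card_mono) auto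
      then show ?thesis using n_def by simp
    next
      case False
      then have Ot: "Omega_g \<tau> = int n" using Otau unfolding adj_def by simp
      have "Omega_g ` Fx \<subseteq> {1..int n}"
      proof
        fix v assume "v \<in> Omega_g ` Fx"
        then obtain \<xi> where x: "\<xi> \<in> Fx" "v = Omega_g \<xi>" by blast
        have "Omega_g \<xi> \<noteq> 0"
        proof
          assume O0: "Omega_g \<xi> = 0"
          define d where "d = int n - int (h_up \<xi>)"
          have d0: "0 \<le> d" using h_le[OF x(1)] n_def d_def by simp
          have ad: "adj d (fptype \<xi>) = 0" using O0 OmF[OF x(1)] d_def n_def by simp
          have "d = 0" using adj_bounds(1)[of d "fptype \<xi>"] ad d0 by simp
          then have hx: "h_up \<xi> = n" and p0: "has_parity 0 (fptype \<xi>)"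
            using d_def ad adj_parity[of d "fptype \<xi>"] by auto
          have xC: "\<xi> \<in> C" "tidy \<xi>" "is_fix \<xi>" using x(1) T' unfolding Fx_def by auto
          obtain cs where cs: "alt_chain cs" "cs \<noteq> []" "hd cs = \<xi>" "length cs = n"
            using h_up_ex[OF xC(2,3)] hx by blast
          have csC: "set cs \<subseteq> C" using chainC[OF xC(1) cs(1,2,3)] .
          define c where "c = last cs"
          have clast: "c = cs ! (n - 1)" using cs(2,4) unfolding c_def by (simp add: last_conv_nth)
          have pc: "has_parity (int (n - 1)) (fptype c)"
            unfolding clast using alt_types[OF cs(1), of "n - 1"] cs p0 n1 by (simp add: hd_conv_nth)
          have pc': "has_parity (int n - 1) (fptype c)" using pc n1 by (simp add: of_nat_diff)
          have cC: "c \<in> C" "is_fix c" "tidy c" using csC cs(1,2) unfolding c_def alt_chain_def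
            by (auto simp: last_in_set)
          have cle_c: "cle c \<tau>" using cle_tau cC unfolding Fx_def by blast
          show False
          proof (cases "fptype c = fptype \<tau>")
            case True then show False using pc' False by simp
          next
            case ne: False
            have "\<not> cle \<tau> c" using cle_antisym cle_c ne by blast
            then have "clt c \<tau>" using cle_c unfolding clt_def by simp
            then have "alt_chain (cs @ [\<tau>])"
              using alt_chain_snoc[OF cs(1,2) ttau ftau] ne unfolding c_def by auto
            moreover have "set (cs @ [\<tau>]) \<subseteq> C" using csC tauC by simp
            ultimately have "length (cs @ [\<tau>]) \<le> cd C" using cd_ge by blast
            then show False using cs(4) n_def by simp
          qed
        qed
        then show "v \<in> {1..int n}" using Obnd[OF x(1)] Ot x(2) by auto
      qed
      then have "card (Omega_g ` Fx) \<le> card {1..int n}" by (intro card_mono) auto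
      then show ?thesis using n_def by simp
    qed
  qed
  have "cd C = ind C" using cd_le_ind ind_le card_le by linarith
  moreover have "ind C = card (Omega_g ` Fx)" using cd_le_ind ind_le card_le by linarith
  ultimately show ?thesis unfolding C_def Fx_def by simp
qed

theorem mainTheorem4:
  shows "(\<forall>(\<xi>::'p fml). tidy \<xi> \<and> is_fix \<xi> \<longrightarrow> has_parity (Omega_g \<xi>) (fptype \<xi>))
   \<and> (\<forall>(\<phi>::'p fml) \<psi>. tidy \<phi> \<and> is_fix \<phi> \<and> tidy \<psi> \<and> is_fix \<psi> \<and> cle \<phi> \<psi> \<longrightarrow>
            Omega_g \<phi> \<le> Omega_g \<psi> \<and>
            (fptype \<phi> \<noteq> fptype \<psi> \<longrightarrow> Omega_g \<phi> < Omega_g \<psi>))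
   \<and> (\<forall>(\<phi>::'p fml). (\<forall>\<psi> \<in> cluster \<phi>. tidy \<psi>) \<longrightarrow>
            cd (cluster \<phi>) = ind (cluster \<phi>) \<and>
            ind (cluster \<phi>) = card (Omega_g ` {\<psi> \<in> cluster \<phi>. is_fix \<psi>}))"
  using part1 part2 part3 by blast


end
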